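(* Let $V$ be a commutative unital quantale whose underlying lattice is a frame. Let $(X,a,+)$ be a $V$-group and $S$ a subgroup of $X$, equipped with the restriction of $a$ to $S\times S$. Then the inclusion $V$-functor $S\hookrightarrow X$ is open if and only if it is proper.
   Context: A commutative unital quantale $V$ is a complete lattice with a commutative associative operation $\otimes$ with unit $k$ preserving arbitrary joins in each variable. A $V$-category $(X,a)$: $a\colon X\times X\to V$ with $k\le a(x,x)$ and $a(x,x')\otimes a(x',x'')\le a(x,x'')$. A $V$-group $(X,a,+)$ is a $V$-category with a group structure (additive, not necessarily abelian) such that $a(x_1,x_2)\otimes a(x_1',x_2')\le a(x_1+x_1',x_2+x_2')$. A $V$-functor $f\colon(X,a)\to(Y,b)$ (a map with $a(x,x')\le b(f(x),f(x'))$) is proper if $b(f(x),y)=\bigvee\{a(x,x')\mid f(x')=y\}$ for all $x\in X$, $y\in Y$, and open if $b(y,f(x))=\bigvee\{a(x',x)\mid f(x')=y\}$ for all $x\in X$, $y\in Y$ (empty joins being $\bot$). *)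

theory Defs
  imports "HOL-Algebra.Group"
begin

definition comm_quantale :: "('v::complete_lattice \<Rightarrow> 'v \<Rightarrow> 'v) \<Rightarrow> 'v \<Rightarrow> bool" where
  "comm_quantale t k \<longleftrightarrow>
     (\<forall>u v w. t (t u v) w = t u (t v w)) \<and>
     (\<forall>u v. t u v = t v u) \<and>
     (\<forall>u. t k u = u \<and> t u k = u) \<and>
     (\<forall>u A. t u (Sup A) = Sup (t u ` A)) \<and>
     (\<forall>u A. t (Sup A) u = Sup ((\<lambda>v. t v u) ` A))"

definition is_frame :: "'v::complete_lattice itself \<Rightarrow> bool" where
  "is_frame _ \<longleftrightarrow> (\<forall>(u::'v) A. inf u (Sup A) = Sup (inf u ` A))"

definition vcat :: "('v::complete_lattice \<Rightarrow> 'v \<Rightarrow> 'v) \<Rightarrow> 'v \<Rightarrow> 'x set \<Rightarrow> ('x \<Rightarrow> 'x \<Rightarrow> 'v) \<Rightarrow> bool" where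
  "vcat t k X a \<longleftrightarrow>
     (\<forall>x\<in>X. k \<le> a x x) \<and>
     (\<forall>x\<in>X. \<forall>x'\<in>X. \<forall>x''\<in>X. t (a x x') (a x' x'') \<le> a x x'')"

text \<open>V-group: the group operation (written multiplicatively in HOL-Algebra) is compatible.\<close>
definition vgroup :: "('v::complete_lattice \<Rightarrow> 'v \<Rightarrow> 'v) \<Rightarrow> 'v \<Rightarrow> ('x, 'm) monoid_scheme \<Rightarrow> ('x \<Rightarrow> 'x \<Rightarrow> 'v) \<Rightarrow> bool" where
  "vgroup t k G a \<longleftrightarrow> group G \<and> vcat t k (carrier G) a \<and>
     (\<forall>x1\<in>carrier G. \<forall>x2\<in>carrier G. \<forall>y1\<in>carrier G. \<forall>y2\<in>carrier G.
        t (a x1 x2) (a y1 y2) \<le> a (x1 \<otimes>\<^bsub>G\<^esub> y1) (x2 \<otimes>\<^bsub>G\<^esub> y2))"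

definition vfunctor :: "'x set \<Rightarrow> ('x \<Rightarrow> 'x \<Rightarrow> 'v::complete_lattice) \<Rightarrow> 'y set \<Rightarrow> ('y \<Rightarrow> 'y \<Rightarrow> 'v) \<Rightarrow> ('x \<Rightarrow> 'y) \<Rightarrow> bool" where
  "vfunctor X a Y b f \<longleftrightarrow> f ` X \<subseteq> Y \<and> (\<forall>x\<in>X. \<forall>x'\<in>X. a x x' \<le> b (f x) (f x'))"

definition vproper :: "'x set \<Rightarrow> ('x \<Rightarrow> 'x \<Rightarrow> 'v::complete_lattice) \<Rightarrow> 'y set \<Rightarrow> ('y \<Rightarrow> 'y \<Rightarrow> 'v) \<Rightarrow> ('x \<Rightarrow> 'y) \<Rightarrow> bool" where
  "vproper X a Y b f \<longleftrightarrow> vfunctor X a Y b f \<and>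
     (\<forall>x\<in>X. \<forall>y\<in>Y. b (f x) y = Sup {a x x' | x'. x' \<in> X \<and> f x' = y})"

definition vopen :: "'x set \<Rightarrow> ('x \<Rightarrow> 'x \<Rightarrow> 'v::complete_lattice) \<Rightarrow> 'y set \<Rightarrow> ('y \<Rightarrow> 'y \<Rightarrow> 'v) \<Rightarrow> ('x \<Rightarrow> 'y) \<Rightarrow> bool" where
  "vopen X a Y b f \<longleftrightarrow> vfunctor X a Y b f \<and>
     (\<forall>x\<in>X. \<forall>y\<in>Y. b y (f x) = Sup {a x' x | x'. x' \<in> X \<and> f x' = y})"

end

theory Submission
  imports Defs
begin

lemma setS: "{a x x' | x'. x' \<in> S \<and> id x' = y} = (if y \<in> S then {a x y} else {})"
  by auto

lemma setS2: "{a x' x | x'. x' \<in> S \<and> id x' = y} = (if y \<in> S then {a y x} else {})"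
  by auto

lemma mono_t:
  assumes "comm_quantale t k" "v \<le> w"
  shows "t u v \<le> t u w"
proof -
  have "t u (Sup {v, w}) = Sup (t u ` {v, w})" using assms(1) unfolding comm_quantale_def by blast
  moreover have "Sup {v, w} = w" using assms(2) by (simp add: sup_absorb2)
  ultimately have "t u w = sup (t u v) (t u w)" by simp
  thus ?thesis by (metis sup.cobounded1)
qed

lemma inv_le:
  fixes G (structure)
  assumes q: "comm_quantale t k" and vg: "vgroup t k G a"
    and x: "x \<in> carrier G" and y: "y \<in> carrier G"
  shows "a x y \<le> a (inv\<^bsub>G\<^esub> y) (inv\<^bsub>G\<^esub> x)"
proof -
  interpret group G using vg unfolding vgroup_def by blast
  have refl: "\<And>z. z \<in> carrier G \<Longrightarrow> k \<le> a z z" using vg unfolding vgroup_def vcat_def by blast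
  have comp: "\<And>x1 x2 y1 y2. x1 \<in> carrier G \<Longrightarrow> x2 \<in> carrier G \<Longrightarrow> y1 \<in> carrier G \<Longrightarrow> y2 \<in> carrier G \<Longrightarrow>
      t (a x1 x2) (a y1 y2) \<le> a (x1 \<otimes> y1) (x2 \<otimes> y2)" using vg unfolding vgroup_def by blast
  have unit: "\<And>u. t k u = u \<and> t u k = u" and comm: "\<And>u v. t u v = t v u"
    using q unfolding comm_quantale_def by blast+
  have "a x y = t (a x y) k" using unit by simp
  also have "\<dots> \<le> t (a x y) (a (inv x) (inv x))" using mono_t[OF q refl] x by simp
  also have "\<dots> \<le> a (x \<otimes> inv x) (y \<otimes> inv x)" using comp[OF x y inv_closed[OF x] inv_closed[OF x]] .
  also have "\<dots> = a \<one> (y \<otimes> inv x)" using x by simp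
  also have "\<dots> = t (a \<one> (y \<otimes> inv x)) k" using unit by simp
  also have "\<dots> \<le> t (a \<one> (y \<otimes> inv x)) (a (inv y) (inv y))" using mono_t[OF q refl] y by simp
  also have "\<dots> = t (a (inv y) (inv y)) (a \<one> (y \<otimes> inv x))" using comm by simp
  also have "\<dots> \<le> a (inv y \<otimes> \<one>) (inv y \<otimes> (y \<otimes> inv x))" using comp[OF inv_closed[OF y] inv_closed[OF y] one_closed m_closed[OF y inv_closed[OF x]]] .
  also have "\<dots> = a (inv y) (inv x)" using x y by (simp add: m_assoc[symmetric])
  finally show ?thesis .
qed

theorem corollary5p7:
  fixes t :: "'v::complete_lattice \<Rightarrow> 'v \<Rightarrow> 'v" and k :: 'v
    and G :: "('x, 'm) monoid_scheme" and a :: "'x \<Rightarrow> 'x \<Rightarrow> 'v" and S :: "'x set"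
  assumes "comm_quantale t k"
    and "is_frame TYPE('v)"
    and "vgroup t k G a"
    and "subgroup S G"
  shows "vopen S a (carrier G) a id \<longleftrightarrow> vproper S a (carrier G) a id"
proof -
  interpret group G using assms(3) unfolding vgroup_def by blast
  have sub: "S \<subseteq> carrier G" using assms(4) subgroup.subset by blast
  have vf: "vfunctor S a (carrier G) a id" using sub unfolding vfunctor_def by auto
  have P: "vproper S a (carrier G) a id \<longleftrightarrow> (\<forall>x\<in>S. \<forall>y\<in>carrier G. y \<notin> S \<longrightarrow> a x y = bot)"
    unfolding vproper_def unfolding setS using vf by auto
  have O: "vopen S a (carrier G) a id \<longleftrightarrow> (\<forall>x\<in>S. \<forall>y\<in>carrier G. y \<notin> S \<longrightarrow> a y x = bot)"
    unfolding vopen_def unfolding setS2 using vf by auto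
  have invS: "\<And>z. z \<in> carrier G \<Longrightarrow> (inv\<^bsub>G\<^esub> z \<in> S) = (z \<in> S)"
    using assms(4) by (metis inv_inv subgroup.m_inv_closed)
  show ?thesis unfolding P O
  proof safe
    fix x y assume H: "\<forall>x\<in>S. \<forall>y\<in>carrier G. y \<notin> S \<longrightarrow> a y x = bot" and xS: "x \<in> S"
      and y: "y \<in> carrier G" "y \<notin> S"
    have x: "x \<in> carrier G" using xS sub by blast
    have "a x y \<le> a (inv\<^bsub>G\<^esub> y) (inv\<^bsub>G\<^esub> x)" using inv_le[OF assms(1,3) x y(1)] .
    also have "\<dots> = bot" using H invS x y xS by auto
    finally show "a x y = bot" by (simp add: bot_unique)
  next
    fix x y assume H: "\<forall>x\<in>S. \<forall>y\<in>carrier G. y \<notin> S \<longrightarrow> a x y = bot" and xS: "x \<in> S"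
      and y: "y \<in> carrier G" "y \<notin> S"
    have x: "x \<in> carrier G" using xS sub by blast
    have "a y x \<le> a (inv\<^bsub>G\<^esub> x) (inv\<^bsub>G\<^esub> y)" using inv_le[OF assms(1,3) y(1) x] .
    also have "\<dots> = bot" using H invS x y xS by auto
    finally show "a y x = bot" by (simp add: bot_unique)
  qed
qed

end
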